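(* For all $m,n\in\mathbb{Z}$ with $\gcd(m,n)=1$ and $mn(m+n)\neq0$ we have $A(m,n)\ge 29$, and $A(m,n)=29$ holds only when $c=-\frac{A(m,n)}{B(m,n)}=-\frac{29}{16}$. Equivalently, among rational $c$ for which $f_c(x)=x^2+c$ has a rational $3$-cycle, the smallest possible absolute value of the numerator of $c$ is $29$, attained only by $c=-\tfrac{29}{16}$.
   Context: $A(m,n)=m^6+2m^5n+4m^4n^2+8m^3n^3+9m^2n^4+4mn^5+n^6$, $B(m,n)=4m^2n^2(m+n)^2$. Standing fact: $f_c(x)=x^2+c$ ($c\in\mathbb{Q}$) has a rational $3$-cycle if and only if $c=-A(m,n)/B(m,n)$ for some coprime integers $m,n$ with $mn(m+n)\neq0$, and this fraction is then in lowest terms. *)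

theory Defs
  imports Complex_Main
begin

definition A :: "int \<Rightarrow> int \<Rightarrow> int" where
  "A m n = m^6 + 2*m^5*n + 4*m^4*n^2 + 8*m^3*n^3 + 9*m^2*n^4 + 4*m*n^5 + n^6"

definition B :: "int \<Rightarrow> int \<Rightarrow> int" where
  "B m n = 4*m^2*n^2*(m+n)^2"

end

theory Submission
  imports Defs
begin

lemma sos_id:
  fixes x y :: real
  shows "x^6 + 2*x^5*y + 4*x^4*y^2 + 8*x^3*y^3 + 9*x^2*y^4 + 4*x*y^5 + y^6 - (x^2+y^2)^3/16 =
   (15/16)*((1/1)*x^3 + (16/15)*x^2*y + (-16/15)*x*y^2 + (-4/5)*y^3)^2 + (1139/240)*((1/1)*x^2*y + (1396/1139)*x*y^2 + (192/1139)*y^3)^2 + (11239/18224)*((1/1)*x*y^2 + (4000/11239)*y^3)^2 + (22393/179824)*((1/1)*y^3)^2"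
  by algebra

lemma A_lower: "16 * A m n \<ge> (m^2+n^2)^3"
proof -
  define x where "x = real_of_int m"
  define y where "y = real_of_int n"
  have "x^6 + 2*x^5*y + 4*x^4*y^2 + 8*x^3*y^3 + 9*x^2*y^4 + 4*x*y^5 + y^6 - (x^2+y^2)^3/16 \<ge> 0"
    unfolding sos_id by (intro add_nonneg_nonneg mult_nonneg_nonneg) auto
  hence "real_of_int (16 * A m n) \<ge> real_of_int ((m^2+n^2)^3)"
    unfolding A_def x_def y_def by simp
  thus ?thesis by linarith
qed

theorem theorem4:
  fixes m n :: int
  assumes "coprime m n" and "m * n * (m + n) \<noteq> 0"
  shows "A m n \<ge> 29 \<and>
         (A m n = 29 \<longrightarrow> - (of_int (A m n) / of_int (B m n)) = (- 29 / 16 :: rat))"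
proof (cases "m^2+n^2 \<ge> 8")
  case True
  have "(8::int)^3 \<le> (m^2+n^2)^3" using True by (intro power_mono) auto
  hence "A m n \<ge> 32" using A_lower[of m n] by simp
  thus ?thesis by simp
next
  case False
  have h8: "m^2+n^2 < 8" using False by simp
  have "m^2 < 9" "n^2 < 9" using h8 by (smt (verit) zero_le_power2)+
  have "\<bar>m\<bar> < 3"
  proof (rule ccontr)
    assume "\<not> \<bar>m\<bar> < 3"
    hence "3*3 \<le> \<bar>m\<bar>*\<bar>m\<bar>" by (intro mult_mono) auto
    thus False using \<open>m^2 < 9\<close> by (simp add: power2_eq_square)
  qed
  moreover have "\<bar>n\<bar> < 3"
  proof (rule ccontr)
    assume "\<not> \<bar>n\<bar> < 3"
    hence "3*3 \<le> \<bar>n\<bar>*\<bar>n\<bar>" by (intro mult_mono) auto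
    thus False using \<open>n^2 < 9\<close> by (simp add: power2_eq_square)
  qed
  ultimately have "m = -2 \<or> m = -1 \<or> m = 0 \<or> m = 1 \<or> m = 2" "n = -2 \<or> n = -1 \<or> n = 0 \<or> n = 1 \<or> n = 2" by auto
  thus ?thesis using assms by (elim disjE) (simp_all add: A_def B_def)
qed

end
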